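(* Let $G$ be a connected claw-free graph of order $n$. Then $\gamma_{oir2}(G)\geq n/2$. Moreover, $\gamma_{oir2}(G)=n/2$ if and only if $G$ is isomorphic to a graph in the family $\mathcal{G}=\mathcal{G}_1\cup\mathcal{G}_2\cup\mathcal{G}_3$ described in the context.
   Context: All graphs are finite and simple. For a graph $G$, a function $f:V(G)\to\mathcal{P}(\{1,2\})$ is a 2-rainbow dominating function if every vertex $v$ with $f(v)=\emptyset$ satisfies $\bigcup_{u\in N(v)}f(u)=\{1,2\}$. It is an outer-independent 2-rainbow dominating function (OI2RD function) if, in addition, the set $\{v: f(v)=\emptyset\}$ is independent. The weight of $f$ is $\sum_{v\in V(G)}|f(v)|$, and $\gamma_{oir2}(G)$ is the minimum weight of an OI2RD function of $G$. A graph is claw-free if it has no induced subgraph isomorphic to $K_{1,3}$. For $k\geq 1$, a $k$-unit is the graph with vertices $v_1,\dots,v_k,u_1,\dots,u_{k-1}$ whose edges are $v_iv_{i+1}$ and $u_iv_i$, $u_iv_{i+1}$ for $1\le i\le k-1$ (a path $v_1\cdots v_k$ with a triangle on each path edge; it has $k-1$ triangles; a 1-unit is $K_1$). Call $v_1$ and $v_k$ its first and last path vertices. $\mathcal{G}_1$: take integers $r\ge1$ and $k_1,\dots,k_r\ge1$ with $k_1+\dots+k_r$ even, take disjoint units $U_1,\dots,U_r$ where $U_j$ is a $k_j$-unit with path $v^j_1\cdots v^j_{k_j}$, and add new vertices $w_1,\dots,w_r$, where $w_j$ is adjacent exactly to $v^j_{k_j}$ and $v^{j+1}_1$ (indices of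 units taken modulo $r$, so $w_r$ is adjacent to $v^r_{k_r}$ and $v^1_1$). (This includes the cycles $C_n$ with $n\equiv 0 \pmod 4$, when all $k_j=1$.) $\mathcal{G}_2$: take a $k$-unit with $k\ge2$ even (so the number of triangles $k-1$ is odd) and add one new vertex adjacent exactly to $v_1$ and $v_k$. $\mathcal{G}_3$: take a cycle $x_1x_2\cdots x_{2q}x_1$ of even length $2q\ge4$ and, for each cycle edge $x_ix_{i+1}$ (indices mod $2q$), add a new vertex adjacent exactly to $x_i$ and $x_{i+1}$ (so the number of triangles is even). *)

theory Defs
  imports Complex_Main
begin

definition simple_graph :: "'a set \<Rightarrow> ('a \<Rightarrow> 'a \<Rightarrow> bool) \<Rightarrow> bool" where
  "simple_graph V E \<longleftrightarrow> finite V \<and> (\<forall>u v. E u v \<longrightarrow> u \<in> V \<and> v \<in> V)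
     \<and> (\<forall>u v. E u v \<longrightarrow> E v u) \<and> (\<forall>v. \<not> E v v)"

definition connected_graph :: "'a set \<Rightarrow> ('a \<Rightarrow> 'a \<Rightarrow> bool) \<Rightarrow> bool" where
  "connected_graph V E \<longleftrightarrow> V \<noteq> {} \<and> (\<forall>u\<in>V. \<forall>v\<in>V. E\<^sup>*\<^sup>* u v)"

definition claw_free :: "'a set \<Rightarrow> ('a \<Rightarrow> 'a \<Rightarrow> bool) \<Rightarrow> bool" where
  "claw_free V E \<longleftrightarrow> \<not> (\<exists>a\<in>V. \<exists>b\<in>V. \<exists>c\<in>V. \<exists>d\<in>V.
      E a b \<and> E a c \<and> E a d \<and> b \<noteq> c \<and> b \<noteq> d \<and> c \<noteq> d
      \<and> \<not> E b c \<and> \<not> E b d \<and> \<not> E c d)"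

definition graph_iso :: "'a set \<Rightarrow> ('a \<Rightarrow> 'a \<Rightarrow> bool) \<Rightarrow> 'b set \<Rightarrow> ('b \<Rightarrow> 'b \<Rightarrow> bool) \<Rightarrow> bool" where
  "graph_iso V E V' E' \<longleftrightarrow> (\<exists>f. bij_betw f V V' \<and> (\<forall>u\<in>V. \<forall>v\<in>V. E u v \<longleftrightarrow> E' (f u) (f v)))"

definition oi2rd :: "'a set \<Rightarrow> ('a \<Rightarrow> 'a \<Rightarrow> bool) \<Rightarrow> ('a \<Rightarrow> nat set) \<Rightarrow> bool" where
  "oi2rd V E f \<longleftrightarrow>
     (\<forall>v\<in>V. f v \<subseteq> {1, 2})
   \<and> (\<forall>v\<in>V. f v = {} \<longrightarrow> (\<Union>u\<in>{u\<in>V. E v u}. f u) = {1, 2})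
   \<and> (\<forall>u\<in>V. \<forall>v\<in>V. f u = {} \<and> f v = {} \<longrightarrow> \<not> E u v)"

definition weight :: "'a set \<Rightarrow> ('a \<Rightarrow> nat set) \<Rightarrow> nat" where
  "weight V f = (\<Sum>v\<in>V. card (f v))"

definition gamma_oir2 :: "'a set \<Rightarrow> ('a \<Rightarrow> 'a \<Rightarrow> bool) \<Rightarrow> nat" where
  "gamma_oir2 V E = (LEAST w. \<exists>f. oi2rd V E f \<and> weight V f = w)"

text \<open>Vertices: GP j i is path vertex v^(j)_(i+1) of unit j (0-indexed),
  GU j i is the triangle vertex u^(j)_(i+1), GW j is the connector w_(j+1).\<close>

datatype gv = GP nat nat | GU nat nat | GW nat

definition sym_rel :: "('b \<Rightarrow> 'b \<Rightarrow> bool) \<Rightarrow> 'b \<Rightarrow> 'b \<Rightarrow> bool" where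
  "sym_rel R x y \<longleftrightarrow> R x y \<or> R y x"

definition G1V :: "nat \<Rightarrow> (nat \<Rightarrow> nat) \<Rightarrow> gv set" where
  "G1V r k = {GP j i | j i. j < r \<and> i < k j} \<union> {GU j i | j i. j < r \<and> Suc i < k j}
      \<union> {GW j | j. j < r}"

definition G1A :: "nat \<Rightarrow> (nat \<Rightarrow> nat) \<Rightarrow> gv \<Rightarrow> gv \<Rightarrow> bool" where
  "G1A r k x y \<longleftrightarrow>
     (\<exists>j<r. \<exists>i. Suc i < k j \<and>
        ((x = GP j i \<and> y = GP j (Suc i)) \<or> (x = GU j i \<and> y = GP j i)
         \<or> (x = GU j i \<and> y = GP j (Suc i))))
   \<or> (\<exists>j<r. x = GW j \<and> (y = GP j (k j - 1) \<or> y = GP (Suc j mod r) 0))"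

definition G1E :: "nat \<Rightarrow> (nat \<Rightarrow> nat) \<Rightarrow> gv \<Rightarrow> gv \<Rightarrow> bool" where
  "G1E r k = sym_rel (G1A r k)"

definition G2V :: "nat \<Rightarrow> gv set" where
  "G2V k = {GP 0 i | i. i < k} \<union> {GU 0 i | i. Suc i < k} \<union> {GW 0}"

definition G2A :: "nat \<Rightarrow> gv \<Rightarrow> gv \<Rightarrow> bool" where
  "G2A k x y \<longleftrightarrow>
     (\<exists>i. Suc i < k \<and>
        ((x = GP 0 i \<and> y = GP 0 (Suc i)) \<or> (x = GU 0 i \<and> y = GP 0 i)
         \<or> (x = GU 0 i \<and> y = GP 0 (Suc i))))
   \<or> (x = GW 0 \<and> (y = GP 0 0 \<or> y = GP 0 (k - 1)))"

definition G2E :: "nat \<Rightarrow> gv \<Rightarrow> gv \<Rightarrow> bool" where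
  "G2E k = sym_rel (G2A k)"

definition G3V :: "nat \<Rightarrow> gv set" where
  "G3V q = {GP 0 i | i. i < 2 * q} \<union> {GU 0 i | i. i < 2 * q}"

definition G3A :: "nat \<Rightarrow> gv \<Rightarrow> gv \<Rightarrow> bool" where
  "G3A q x y \<longleftrightarrow>
     (\<exists>i<2 * q. (x = GP 0 i \<and> y = GP 0 (Suc i mod (2 * q)))
        \<or> (x = GU 0 i \<and> y = GP 0 i) \<or> (x = GU 0 i \<and> y = GP 0 (Suc i mod (2 * q))))"

definition G3E :: "nat \<Rightarrow> gv \<Rightarrow> gv \<Rightarrow> bool" where
  "G3E q = sym_rel (G3A q)"

definition in_family_G :: "'a set \<Rightarrow> ('a \<Rightarrow> 'a \<Rightarrow> bool) \<Rightarrow> bool" where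
  "in_family_G V E \<longleftrightarrow>
     (\<exists>r k. r \<ge> 1 \<and> (\<forall>j<r. k j \<ge> 1) \<and> even (\<Sum>j<r. k j) \<and> graph_iso V E (G1V r k) (G1E r k))
   \<or> (\<exists>k. k \<ge> 2 \<and> even k \<and> graph_iso V E (G2V k) (G2E k))
   \<or> (\<exists>q. q \<ge> 2 \<and> graph_iso V E (G3V q) (G3E q))"

end

theory Submission
  imports Defs
begin

lemma iso_sym:
  assumes "graph_iso V E V' E'" shows "graph_iso V' E' V E"
proof -
  obtain f where f: "bij_betw f V V'" "\<forall>u\<in>V. \<forall>v\<in>V. E u v \<longleftrightarrow> E' (f u) (f v)"
    using assms unfolding graph_iso_def by blast
  let ?g = "inv_into V f"
  have g: "bij_betw ?g V' V" using f(1) by (rule bij_betw_inv_into)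
  have "\<forall>u\<in>V'. \<forall>v\<in>V'. E' u v \<longleftrightarrow> E (?g u) (?g v)"
  proof (intro ballI)
    fix u v assume u: "u \<in> V'" and v: "v \<in> V'"
    have "?g u \<in> V" "?g v \<in> V" using g u v by (auto simp: bij_betw_def)
    moreover have "f (?g u) = u" "f (?g v) = v" using f(1) u v
      by (auto simp: bij_betw_def intro: f_inv_into_f)
    ultimately show "E' u v \<longleftrightarrow> E (?g u) (?g v)" using f(2) by metis
  qed
  then show ?thesis using g unfolding graph_iso_def by blast
qed

lemma iso_trans:
  assumes "graph_iso V E V' E'" "graph_iso V' E' V'' E''" shows "graph_iso V E V'' E''"
proof -
  obtain f where f: "bij_betw f V V'" "\<forall>u\<in>V. \<forall>v\<in>V. E u v \<longleftrightarrow> E' (f u) (f v)"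
    using assms(1) unfolding graph_iso_def by blast
  obtain g where g: "bij_betw g V' V''" "\<forall>u\<in>V'. \<forall>v\<in>V'. E' u v \<longleftrightarrow> E'' (g u) (g v)"
    using assms(2) unfolding graph_iso_def by blast
  have "bij_betw (g \<circ> f) V V''" using f(1) g(1) by (rule bij_betw_trans)
  moreover have "\<forall>u\<in>V. \<forall>v\<in>V. E u v \<longleftrightarrow> E'' ((g \<circ> f) u) ((g \<circ> f) v)"
    using f g bij_betwE[OF f(1)] by auto
  ultimately show ?thesis unfolding graph_iso_def by blast
qed

lemma iso_from_inv:
  assumes "bij_betw g V' V" "\<forall>a\<in>V'. \<forall>b\<in>V'. E (g a) (g b) \<longleftrightarrow> E' a b"
  shows "graph_iso V E V' E'"
proof -
  have "graph_iso V' E' V E" unfolding graph_iso_def using assms by (metis (full_types))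
  then show ?thesis by (rule iso_sym)
qed

lemma oi2rd_transfer:
  assumes "graph_iso V E V' E'" "oi2rd V' E' g"
  shows "\<exists>f. oi2rd V E f \<and> weight V f = weight V' g"
proof -
  obtain h where h: "bij_betw h V V'" "\<forall>u\<in>V. \<forall>v\<in>V. E u v \<longleftrightarrow> E' (h u) (h v)"
    using assms(1) unfolding graph_iso_def by blast
  have hV: "\<And>v. v \<in> V \<Longrightarrow> h v \<in> V'" using h(1) by (auto simp: bij_betw_def)
  have img: "\<And>v. v \<in> V \<Longrightarrow> h ` {u\<in>V. E v u} = {u'\<in>V'. E' (h v) u'}"
  proof -
    fix v assume v: "v \<in> V"
    show "h ` {u\<in>V. E v u} = {u'\<in>V'. E' (h v) u'}"
    proof
      show "h ` {u\<in>V. E v u} \<subseteq> {u'\<in>V'. E' (h v) u'}" using h(2) v hV by auto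
      show "{u'\<in>V'. E' (h v) u'} \<subseteq> h ` {u\<in>V. E v u}"
      proof
        fix u' assume "u' \<in> {u'\<in>V'. E' (h v) u'}"
        then have u': "u' \<in> V'" "E' (h v) u'" by auto
        then obtain u where "u \<in> V" "h u = u'" using h(1) by (auto simp: bij_betw_def)
        then show "u' \<in> h ` {u\<in>V. E v u}" using h(2) v u' by auto
      qed
    qed
  qed
  let ?f = "g \<circ> h"
  have "oi2rd V E ?f"
    unfolding oi2rd_def
  proof (intro conjI ballI impI)
    fix v assume "v \<in> V" then show "?f v \<subseteq> {1,2}" using assms(2) hV unfolding oi2rd_def by auto
  next
    fix v assume v: "v \<in> V" and e: "?f v = {}"
    have "(\<Union>u\<in>{u\<in>V. E v u}. ?f u) = (\<Union>u'\<in>h ` {u\<in>V. E v u}. g u')" by auto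
    also have "\<dots> = (\<Union>u'\<in>{u'\<in>V'. E' (h v) u'}. g u')" using img v by simp
    also have "\<dots> = {1,2}" using assms(2) hV v e unfolding oi2rd_def by auto
    finally show "(\<Union>u\<in>{u\<in>V. E v u}. ?f u) = {1,2}" .
  next
    fix u v assume "u \<in> V" "v \<in> V" "?f u = {} \<and> ?f v = {}"
    then show "\<not> E u v" using assms(2) hV h(2) unfolding oi2rd_def by auto
  qed
  moreover have "weight V ?f = weight V' g"
    unfolding weight_def using sum.reindex_bij_betw[OF h(1), of "\<lambda>x. card (g x)"] by simp
  ultimately show ?thesis by blast
qed

lemma oi2rd_exists: "oi2rd V E (\<lambda>_. {1})"
  unfolding oi2rd_def by auto

lemma gamma_attained: "\<exists>f. oi2rd V E f \<and> weight V f = gamma_oir2 V E"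
proof -
  have "\<exists>w. \<exists>f. oi2rd V E f \<and> weight V f = w" using oi2rd_exists by blast
  then show ?thesis unfolding gamma_oir2_def by (rule LeastI_ex)
qed

lemma gamma_le: "oi2rd V E f \<Longrightarrow> gamma_oir2 V E \<le> weight V f"
  unfolding gamma_oir2_def by (rule Least_le) blast

lemma claw3:
  assumes cf: "claw_free V E" and a: "a \<in> V" and A: "A \<subseteq> V" "\<forall>b\<in>A. E a b"
    and ind: "\<forall>b\<in>A. \<forall>c\<in>A. \<not> E b c"
  shows "card A \<le> 2"
proof (rule ccontr)
  assume "\<not> card A \<le> 2"
  then have "3 \<le> card A" by simp
  then obtain B where B: "B \<subseteq> A" "card B = 3" by (meson obtain_subset_with_card_n)
  then obtain x y z where xyz: "B = {x,y,z}" "x \<noteq> y" "y \<noteq> z" "x \<noteq> z" by (auto simp: card_3_iff)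
  then have m: "x \<in> A" "y \<in> A" "z \<in> A" using B(1) by auto
  then have "x \<in> V" "y \<in> V" "z \<in> V" "E a x" "E a y" "E a z" "\<not> E x y" "\<not> E x z" "\<not> E y z"
    using A ind by auto
  then have "\<exists>a\<in>V. \<exists>b\<in>V. \<exists>c\<in>V. \<exists>d\<in>V.
      E a b \<and> E a c \<and> E a d \<and> b \<noteq> c \<and> b \<noteq> d \<and> c \<noteq> d
      \<and> \<not> E b c \<and> \<not> E b d \<and> \<not> E c d" using a xyz by blast
  then show False using cf unfolding claw_free_def by blast
qed

lemma fin_f: "oi2rd V E f \<Longrightarrow> v \<in> V \<Longrightarrow> finite (f v) \<and> card (f v) \<le> 2"
proof -
  assume "oi2rd V E f" "v \<in> V"
  then have sub: "f v \<subseteq> {1,2}" unfolding oi2rd_def by blast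
  have "finite (f v)" using sub finite_subset by blast
  moreover have "card (f v) \<le> card {1::nat,2}" using sub by (intro card_mono) auto
  ultimately show ?thesis by simp
qed

lemma counting:
  assumes sg: "simple_graph V E" and cf: "claw_free V E" and f: "oi2rd V E f"
  defines "S \<equiv> {v\<in>V. f v = {}}"
  shows "card V \<le> 2 * weight V f"
    and "card V = 2 * weight V f \<Longrightarrow>
      (\<forall>t\<in>V - S. card (f t) = 1) \<and> (\<forall>t\<in>V - S. card {s\<in>S. E s t} = 2)
      \<and> (\<forall>s\<in>S. card {u\<in>V. E s u} = 2)"
proof -
  have finV: "finite V" using sg unfolding simple_graph_def by blast
  have sym: "\<And>u v. E u v \<Longrightarrow> E v u" and inV: "\<And>u v. E u v \<Longrightarrow> u \<in> V \<and> v \<in> V"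
    using sg unfolding simple_graph_def by blast+
  have indS: "\<And>u v. u \<in> S \<Longrightarrow> v \<in> S \<Longrightarrow> \<not> E u v" using f unfolding oi2rd_def S_def by blast
  have SV: "S \<subseteq> V" unfolding S_def by blast
  have finS: "finite S" using finV SV finite_subset by blast
  define c where "c u = card {s\<in>S. E s u}" for u
  have c2: "c u \<le> 2" if "u \<in> V" for u
    unfolding c_def using claw3[OF cf that, of "{s\<in>S. E s u}"] SV sym indS by blast
  define g where "g s = (\<Sum>u\<in>V. if E s u then card (f u) else 0)" for s
  have swap: "(\<Sum>s\<in>S. g s) = (\<Sum>u\<in>V. card (f u) * c u)"
  proof -
    have "(\<Sum>s\<in>S. g s) = (\<Sum>u\<in>V. \<Sum>s\<in>S. if E s u then card (f u) else 0)"
      unfolding g_def by (rule sum.swap)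
    also have "\<dots> = (\<Sum>u\<in>V. card (f u) * c u)"
    proof (rule sum.cong[OF refl])
      fix u assume "u \<in> V"
      have "(\<Sum>s\<in>S. if E s u then card (f u) else 0) = (\<Sum>s\<in>{s\<in>S. E s u}. card (f u))"
        using sum.inter_filter[OF finS, of "\<lambda>_. card (f u)" "\<lambda>s. E s u"] by simp
      also have "\<dots> = card (f u) * c u" unfolding c_def by simp
      finally show "(\<Sum>s\<in>S. if E s u then card (f u) else 0) = card (f u) * c u" .
    qed
    finally show ?thesis .
  qed
  have Ns: "{u\<in>V. E s u} \<subseteq> V - S" if "s \<in> S" for s using indS that by blast
  have gs: "g s = (\<Sum>u\<in>{u\<in>V. E s u}. card (f u))" for s
    unfolding g_def using finV by (simp add: sum.inter_filter)
  have g2: "2 \<le> g s" if s: "s \<in> S" for s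
  proof -
    have "(\<Union>u\<in>{u\<in>V. E s u}. f u) = {1,2}" using f s unfolding oi2rd_def S_def by blast
    then have "card (\<Union>u\<in>{u\<in>V. E s u}. f u) = 2" by simp
    moreover have "card (\<Union>u\<in>{u\<in>V. E s u}. f u) \<le> g s" unfolding gs
      by (rule card_UN_le) (use finV in simp)
    ultimately show ?thesis by simp
  qed
  have fge1: "1 \<le> card (f t)" if "t \<in> V - S" for t
    using that fin_f[OF f, of t] unfolding S_def by (simp add: Suc_leI card_gt_0_iff)
  have wsplit: "weight V f = (\<Sum>u\<in>V - S. card (f u))"
    unfolding weight_def
    by (rule sum.mono_neutral_right) (use finV in \<open>auto simp: S_def\<close>)
  have wT: "card (V - S) \<le> weight V f"
    unfolding wsplit using sum_mono[of "V - S" "\<lambda>_. 1::nat" "\<lambda>u. card (f u)"] fge1 by simp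
  have A: "2 * card S \<le> (\<Sum>s\<in>S. g s)" using sum_mono[of S "\<lambda>_. 2::nat" g] g2 by simp
  have B: "(\<Sum>u\<in>V. card (f u) * c u) \<le> (\<Sum>u\<in>V. card (f u) * 2)"
    by (rule sum_mono) (simp add: c2)
  have B': "(\<Sum>u\<in>V. card (f u) * 2) = 2 * weight V f"
    unfolding weight_def by (simp add: sum_distrib_left mult.commute)
  have cardV: "card V = card S + card (V - S)"
    using finV SV by (metis card_Diff_subset finS add_diff_inverse_nat card_mono not_less)
  show "card V \<le> 2 * weight V f" using A B B' swap wT cardV by linarith
  assume eq: "card V = 2 * weight V f"
  have cS: "card S = weight V f" and cT: "card (V - S) = weight V f"
    using A B B' swap wT cardV eq by linarith+
  have f1: "\<forall>t\<in>V - S. card (f t) = 1"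
  proof (rule ccontr)
    assume "\<not> (\<forall>t\<in>V - S. card (f t) = 1)"
    then obtain t where "t \<in> V - S" "1 < card (f t)" using fge1 by force
    then have "(\<Sum>u\<in>V - S. (1::nat)) < (\<Sum>u\<in>V - S. card (f u))"
      using fge1 finV by (intro sum_strict_mono_ex1) auto
    then show False using cT wsplit by simp
  qed
  have eqB: "(\<Sum>u\<in>V. card (f u) * c u) = (\<Sum>u\<in>V. card (f u) * 2)"
    using A B B' swap cS by linarith
  have c2eq: "\<forall>t\<in>V - S. c t = 2"
  proof (rule ccontr)
    assume "\<not> (\<forall>t\<in>V - S. c t = 2)"
    then obtain t where t: "t \<in> V - S" "c t \<noteq> 2" by blast
    then have "card (f t) * c t < card (f t) * 2" using c2[of t] f1 by auto
    then have "(\<Sum>u\<in>V. card (f u) * c u) < (\<Sum>u\<in>V. card (f u) * 2)"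
      using t c2 finV by (intro sum_strict_mono_ex1) auto
    then show False using eqB by simp
  qed
  have gseq: "\<forall>s\<in>S. g s = 2"
  proof (rule ccontr)
    assume "\<not> (\<forall>s\<in>S. g s = 2)"
    then obtain s where s: "s \<in> S" "g s \<noteq> 2" by blast
    then have "(\<Sum>s\<in>S. (2::nat)) < (\<Sum>s\<in>S. g s)"
      using g2 finS s by (intro sum_strict_mono_ex1) (auto, metis le_neq_implies_less)
    then show False using A B B' swap cS eq by simp
  qed
  have "\<forall>s\<in>S. card {u\<in>V. E s u} = 2"
  proof
    fix s assume s: "s \<in> S"
    have "g s = (\<Sum>u\<in>{u\<in>V. E s u}. 1)" unfolding gs
      by (rule sum.cong[OF refl]) (use f1 Ns[OF s] in auto)
    then show "card {u\<in>V. E s u} = 2" using gseq s by simp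
  qed
  then show "(\<forall>t\<in>V - S. card (f t) = 1) \<and> (\<forall>t\<in>V - S. card {s\<in>S. E s t} = 2)
      \<and> (\<forall>s\<in>S. card {u\<in>V. E s u} = 2)" using f1 c2eq unfolding c_def by blast
qed

definition CV :: "nat \<Rightarrow> gv set" where
  "CV m = {GP 0 i | i. i < m} \<union> {GU 0 i | i. i < m}"

definition CA :: "nat \<Rightarrow> (nat \<Rightarrow> bool) \<Rightarrow> gv \<Rightarrow> gv \<Rightarrow> bool" where
  "CA m tri a b \<longleftrightarrow> (\<exists>i<m. (a = GP 0 i \<and> b = GP 0 (Suc i mod m) \<and> tri i)
      \<or> (a = GU 0 i \<and> b = GP 0 i) \<or> (a = GU 0 i \<and> b = GP 0 (Suc i mod m)))"

definition CE :: "nat \<Rightarrow> (nat \<Rightarrow> bool) \<Rightarrow> gv \<Rightarrow> gv \<Rightarrow> bool" where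
  "CE m tri = sym_rel (CA m tri)"

lemma CE_PP: "p < m \<Longrightarrow> q < m \<Longrightarrow> CE m tri (GP 0 p) (GP 0 q) \<longleftrightarrow>
   (tri p \<and> q = Suc p mod m) \<or> (tri q \<and> p = Suc q mod m)"
  unfolding CE_def sym_rel_def CA_def by auto

lemma CE_UP: "CE m tri (GU 0 p) (GP 0 q) \<longleftrightarrow> p < m \<and> (q = p \<or> q = Suc p mod m)"
  unfolding CE_def sym_rel_def CA_def by auto

lemma CE_PU: "CE m tri (GP 0 q) (GU 0 p) \<longleftrightarrow> p < m \<and> (q = p \<or> q = Suc p mod m)"
  unfolding CE_def sym_rel_def CA_def by auto

lemma CE_UU: "\<not> CE m tri (GU 0 p) (GU 0 q)"
  unfolding CE_def sym_rel_def CA_def by auto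

definition oth :: "'a set \<Rightarrow> 'a \<Rightarrow> 'a" where
  "oth A a = (THE b. b \<in> A \<and> b \<noteq> a)"

lemma oth:
  assumes "card A = 2" "a \<in> A"
  shows "oth A a \<in> A" "oth A a \<noteq> a" "\<And>b. b \<in> A \<Longrightarrow> b = a \<or> b = oth A a"
proof -
  obtain x y where A: "A = {x,y}" "x \<noteq> y" using assms(1) by (auto simp: card_2_iff)
  have "\<exists>!b. b \<in> A \<and> b \<noteq> a" using A assms(2) by auto
  then have th: "oth A a \<in> A \<and> oth A a \<noteq> a" unfolding oth_def by (rule theI')
  then show "oth A a \<in> A" "oth A a \<noteq> a" by auto
  fix b assume "b \<in> A" then show "b = a \<or> b = oth A a" using th A assms(2) by auto
qed

primrec wk :: "('a \<Rightarrow> 'a set) \<Rightarrow> ('a \<Rightarrow> 'a set) \<Rightarrow> 'a \<times> 'a \<Rightarrow> nat \<Rightarrow> 'a \<times> 'a" where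
  "wk N NS d 0 = d"
| "wk N NS d (Suc i) = (let t' = oth (N (snd (wk N NS d i))) (fst (wk N NS d i))
                       in (t', oth (NS t') (snd (wk N NS d i))))"

locale eqs =
  fixes V :: "'a set" and E :: "'a \<Rightarrow> 'a \<Rightarrow> bool" and f :: "'a \<Rightarrow> nat set" and S :: "'a set"
  assumes sg: "simple_graph V E" and conn: "connected_graph V E" and cf: "claw_free V E"
    and f: "oi2rd V E f" and S_def: "S = {v\<in>V. f v = {}}"
    and c1: "\<forall>t\<in>V - S. card (f t) = 1" and c2: "\<forall>t\<in>V - S. card {s\<in>S. E s t} = 2"
    and c3: "\<forall>s\<in>S. card {u\<in>V. E s u} = 2"
begin

definition "N s = {u\<in>V. E s u}"
definition "NS t = {s\<in>S. E s t}"

lemma finV: "finite V" using sg unfolding simple_graph_def by blast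
lemma sym: "E u v \<Longrightarrow> E v u" using sg unfolding simple_graph_def by blast
lemma inV: "E u v \<Longrightarrow> u \<in> V" "E u v \<Longrightarrow> v \<in> V" using sg unfolding simple_graph_def by blast+
lemma irr: "\<not> E v v" using sg unfolding simple_graph_def by blast
lemma indS: "u \<in> S \<Longrightarrow> v \<in> S \<Longrightarrow> \<not> E u v" using f unfolding oi2rd_def S_def by blast
lemma SV: "S \<subseteq> V" unfolding S_def by blast
lemma N_T: "s \<in> S \<Longrightarrow> u \<in> N s \<Longrightarrow> u \<in> V - S" unfolding N_def using indS by blast
lemma cardN: "s \<in> S \<Longrightarrow> card (N s) = 2" using c3 unfolding N_def by blast
lemma cardNS: "t \<in> V - S \<Longrightarrow> card (NS t) = 2" using c2 unfolding NS_def by blast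

lemma fT: "t \<in> V - S \<Longrightarrow> f t = {1} \<or> f t = {2}"
proof -
  assume t: "t \<in> V - S"
  then have "card (f t) = 1" "f t \<subseteq> {1,2}" using c1 f unfolding oi2rd_def by auto
  then obtain a where "f t = {a}" by (auto simp: card_1_singleton_iff)
  then show ?thesis using \<open>f t \<subseteq> {1,2}\<close> by auto
qed

lemma fN: "s \<in> S \<Longrightarrow> (\<Union>u\<in>N s. f u) = {1,2}"
  using f SV unfolding oi2rd_def S_def N_def by blast

lemma claw_share:
  assumes t: "t \<in> V - S" and u: "u \<in> V - S" and e: "E t u"
    and a: "a \<in> S" "E a t" and b: "b \<in> S" "E b t" and ab: "a \<noteq> b"
  shows "E a u \<or> E b u"
proof (rule ccontr)
  assume H: "\<not> (E a u \<or> E b u)"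
  have "t \<in> V" "a \<in> V" "b \<in> V" "u \<in> V" using t u a b SV by auto
  moreover have "E t a" "E t b" "E t u" using a b e sym by auto
  moreover have "a \<noteq> u" "b \<noteq> u" using a b u by auto
  moreover have "\<not> E a b" "\<not> E a u" "\<not> E b u" using indS a b H by auto
  ultimately have "\<exists>a\<in>V. \<exists>b\<in>V. \<exists>c\<in>V. \<exists>d\<in>V.
      E a b \<and> E a c \<and> E a d \<and> b \<noteq> c \<and> b \<noteq> d \<and> c \<noteq> d
      \<and> \<not> E b c \<and> \<not> E b d \<and> \<not> E c d" using ab by blast
  then show False using cf unfolding claw_free_def by blast
qed

end

locale walk = eqs +
  fixes t0 s0
  assumes t0: "t0 \<in> V - S" and s0: "s0 \<in> S" and e0: "E s0 t0"
begin

definition "x i = fst (wk N NS (t0, s0) i)"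
definition "s i = snd (wk N NS (t0, s0) i)"

lemma x0: "x 0 = t0" and s_0: "s 0 = s0" unfolding x_def s_def by auto

lemma xSuc: "x (Suc i) = oth (N (s i)) (x i)"
  unfolding x_def s_def by (simp add: Let_def)
lemma sSuc: "s (Suc i) = oth (NS (x (Suc i))) (s i)"
  unfolding x_def s_def by (simp add: Let_def)

lemma inv: "x i \<in> V - S \<and> s i \<in> S \<and> E (s i) (x i)"
proof (induction i)
  case 0 then show ?case using t0 s0 e0 x0 s_0 by simp
next
  case (Suc i)
  then have xi: "x i \<in> N (s i)" unfolding N_def by (auto dest: inV)
  have n2: "card (N (s i)) = 2" using Suc cardN by blast
  have x1: "x (Suc i) \<in> N (s i)" using oth(1)[OF n2 xi] xSuc by simp
  then have x1T: "x (Suc i) \<in> V - S" using N_T Suc by blast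
  have "s i \<in> NS (x (Suc i))" using x1 Suc unfolding NS_def N_def by auto
  then have "s (Suc i) \<in> NS (x (Suc i))" using oth(1)[OF cardNS[OF x1T]] sSuc by simp
  then show ?case using x1T unfolding NS_def by auto
qed

lemma xT: "x i \<in> V - S" and sS: "s i \<in> S" and esx: "E (s i) (x i)" using inv by auto

lemma esx1: "E (s i) (x (Suc i))" and x_ne: "x (Suc i) \<noteq> x i"
proof -
  have xi: "x i \<in> N (s i)" using esx xT unfolding N_def by auto
  have n2: "card (N (s i)) = 2" using sS cardN by blast
  show "E (s i) (x (Suc i))" using oth(1)[OF n2 xi] xSuc unfolding N_def by simp
  show "x (Suc i) \<noteq> x i" using oth(2)[OF n2 xi] xSuc by simp
qed

lemma s_ne: "s (Suc i) \<noteq> s i"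
proof -
  have "s i \<in> NS (x (Suc i))" using esx1 sS unfolding NS_def by auto
  then show ?thesis using oth(2)[OF cardNS[OF xT]] sSuc by simp
qed

lemma Ns: "E (s i) u \<Longrightarrow> u = x i \<or> u = x (Suc i)"
proof -
  assume e: "E (s i) u"
  have xi: "x i \<in> N (s i)" using esx xT unfolding N_def by auto
  have n2: "card (N (s i)) = 2" using sS cardN by blast
  have "u \<in> N (s i)" using e unfolding N_def by (auto dest: inV)
  then show ?thesis using oth(3)[OF n2 xi] xSuc by auto
qed

lemma NSx: "a \<in> S \<Longrightarrow> E a (x (Suc i)) \<Longrightarrow> a = s i \<or> a = s (Suc i)"
proof -
  assume a: "a \<in> S" "E a (x (Suc i))"
  have si: "s i \<in> NS (x (Suc i))" using esx1 sS unfolding NS_def by auto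
  have "a \<in> NS (x (Suc i))" using a unfolding NS_def by auto
  then show ?thesis using oth(3)[OF cardNS[OF xT] si] sSuc by auto
qed

definition "m = (LEAST j. 0 < j \<and> (\<exists>i<j. x i = x j))"

lemma m_ex: "\<exists>j. 0 < j \<and> (\<exists>i<j. x i = x j)"
proof (rule ccontr)
  assume H: "\<not> ?thesis"
  let ?K = "card (V - S)"
  have "inj_on x {..?K}"
  proof (rule inj_onI)
    fix a b assume "a \<in> {..?K}" "b \<in> {..?K}" "x a = x b"
    show "a = b"
    proof (rule ccontr)
      assume "a \<noteq> b"
      then have "a < b \<or> b < a" by arith
      then show False using H \<open>x a = x b\<close> by (metis not_less0 neq0_conv)
    qed
  qed
  moreover have "x ` {..?K} \<subseteq> V - S" using xT by blast
  ultimately have "card {..?K} \<le> ?K" using card_inj_on_le finV by blast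
  then show False by simp
qed

lemma m_prop: "0 < m \<and> (\<exists>i<m. x i = x m)"
  unfolding m_def using m_ex by (rule LeastI_ex)

lemma m_min: "j < m \<Longrightarrow> i < j \<Longrightarrow> x i \<noteq> x j"
  using not_less_Least[of j "\<lambda>j. 0 < j \<and> (\<exists>i<j. x i = x j)"] unfolding m_def[symmetric] by auto

lemma x_inj: "i < m \<Longrightarrow> j < m \<Longrightarrow> x i = x j \<Longrightarrow> i = j"
  by (metis m_min nat_neq_iff)

lemma xm: "x m = x 0"
proof -
  obtain p where mp: "m = Suc p" using m_prop by (metis gr0_implies_Suc)
  obtain i0 where i0: "i0 < m" "x i0 = x m" using m_prop by blast
  show ?thesis
  proof (cases i0)
    case 0 then show ?thesis using i0 by simp
  next
    case (Suc i)
    have sp: "s p \<in> S" "E (s p) (x (Suc i))" using sS esx1[of p] mp i0 Suc by auto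
    from NSx[OF sp] show ?thesis
    proof
      assume "s p = s i"
      then have "x p = x i \<or> x p = x (Suc i)" using Ns[of i "x p"] esx[of p] by simp
      moreover have "x p \<noteq> x (Suc i)" using x_ne[of p] i0 Suc mp by simp
      ultimately have "x p = x i" by simp
      then show ?thesis using x_inj[of p i] i0 Suc mp by simp
    next
      assume sps: "s p = s (Suc i)"
      then have "x p = x (Suc i) \<or> x p = x (Suc (Suc i))" using Ns[of "Suc i" "x p"] esx[of p] by simp
      moreover have "x p \<noteq> x (Suc i)" using x_ne[of p] i0 Suc mp by simp
      ultimately have xp: "x p = x (Suc (Suc i))" by simp
      show ?thesis
      proof (cases "Suc i = p")
        case True then show ?thesis using xp x_ne[of p] by simp
      next
        case False
        then have lt: "Suc i < p" using i0 Suc mp by simp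
        show ?thesis
        proof (cases "Suc (Suc i) = p")
          case True then show ?thesis using sps s_ne[of "Suc i"] by simp
        next
          case False
          then show ?thesis using x_inj[of p "Suc (Suc i)"] xp mp lt by simp
        qed
      qed
    qed
  qed
qed

lemma sm: "s m = s 0"
proof -
  obtain p where mp: "m = Suc p" using m_prop by (metis gr0_implies_Suc)
  have "s p \<noteq> s 0"
  proof
    assume eq: "s p = s 0"
    then have "x p = x 0 \<or> x p = x 1" using Ns[of 0 "x p"] esx[of p] by simp
    moreover have "x p \<noteq> x 0" using x_ne[of p] xm mp by simp
    ultimately have xp: "x p = x 1" by simp
    consider "p = 0" | "p = 1" | "1 < p" by arith
    then show False
    proof cases
      case 1 then show ?thesis using xp x_ne[of 0] by simp
    next
      case 2 then show ?thesis using eq s_ne[of 0] by simp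
    next
      case 3 then show ?thesis using x_inj[of p 1] xp mp by simp
    qed
  qed
  moreover have "s 0 = s p \<or> s 0 = s (Suc p)" using NSx[of "s 0" p] sS esx[of 0] xm mp by simp
  ultimately show ?thesis using mp by simp
qed

lemma wk_per: "wk N NS (t0, s0) (i + m) = wk N NS (t0, s0) i"
proof (induction i)
  case 0
  have "wk N NS (t0, s0) m = (x m, s m)" unfolding x_def s_def by simp
  then show ?case using xm sm x0 s_0 by simp
next
  case (Suc i) then show ?case by (simp add: Let_def)
qed

lemma x_mod: "x i = x (i mod m)" and s_mod: "s i = s (i mod m)"
proof -
  have "wk N NS (t0, s0) i = wk N NS (t0, s0) (i mod m)"
  proof (induction i rule: nat_less_induct)
    case (1 n)
    show ?case
    proof (cases "n < m")
      case True then show ?thesis by simp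
    next
      case False
      then have "n = (n - m) + m" by simp
      then have "wk N NS (t0, s0) n = wk N NS (t0, s0) (n - m)" using wk_per by metis
      also have "\<dots> = wk N NS (t0, s0) ((n - m) mod m)" using 1 m_prop False by simp
      also have "(n - m) mod m = n mod m" using False by (simp add: mod_if)
      finally show ?thesis .
    qed
  qed
  then show "x i = x (i mod m)" "s i = s (i mod m)" unfolding x_def s_def by simp_all
qed

lemma m2: "2 \<le> m"
proof (rule ccontr)
  assume "\<not> 2 \<le> m"
  then have "m = 1" using m_prop by simp
  then show False using xm x_ne[of 0] by simp
qed

lemma x_eq: "x a = x b \<longleftrightarrow> a mod m = b mod m"
  using x_inj[of "a mod m" "b mod m"] m_prop x_mod[of a] x_mod[of b] by auto

lemma s_inj: "a < m \<Longrightarrow> b < m \<Longrightarrow> s a = s b \<Longrightarrow> a = b"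
proof -
  have key: "a < b \<Longrightarrow> b < m \<Longrightarrow> s a \<noteq> s b" for a b
  proof
    assume ab: "a < b" "b < m" and eq: "s a = s b"
    have "x b = x a \<or> x b = x (Suc a)" using Ns[of a "x b"] esx[of b] eq by simp
    moreover have "x b \<noteq> x a" using x_inj[of a b] ab by auto
    ultimately have "x b = x (Suc a)" by simp
    then have b: "b = Suc a" using x_inj[of b "Suc a"] ab by simp
    have "x (Suc b) = x a \<or> x (Suc b) = x (Suc a)" using Ns[of a "x (Suc b)"] esx1[of b] eq by simp
    then have "x (Suc b) = x a" using x_ne[of b] b by auto
    then have "(Suc b) mod m = a mod m" using x_eq by blast
    moreover have "Suc b \<noteq> m \<Longrightarrow> Suc b < m" using ab by simp
    ultimately have "Suc b = m \<and> a = 0" using ab by (cases "Suc b = m") auto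
    then show False using eq b s_ne[of 0] by simp
  qed
  assume "a < m" "b < m" "s a = s b"
  then show "a = b" using key[of a b] key[of b a] by (metis nat_neq_iff)
qed

lemma s_eq: "s a = s b \<longleftrightarrow> a mod m = b mod m"
  using s_inj[of "a mod m" "b mod m"] m_prop s_mod[of a] s_mod[of b] by auto

definition "X = x ` {..<m} \<union> s ` {..<m}"

lemma xX: "x i \<in> X" and sX: "s i \<in> X"
  unfolding X_def using x_mod[of i] s_mod[of i] m_prop by auto

lemma x_pred: "x i = x (Suc (i + m - 1))"
  using x_mod[of i] x_mod[of "Suc (i + m - 1)"] m_prop by simp

lemma NS_x: "a \<in> S \<Longrightarrow> E a (x i) \<Longrightarrow> a = s (i + m - 1) \<or> a = s (i + m)"
  using NSx[of a "i + m - 1"] x_pred[of i] m_prop by simp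

lemma closed: "a \<in> X \<Longrightarrow> E a b \<Longrightarrow> b \<in> X"
proof -
  assume a: "a \<in> X" and e: "E a b"
  then obtain i where "a = x i \<or> a = s i" unfolding X_def by blast
  then show "b \<in> X"
  proof
    assume as: "a = s i"
    then show ?thesis using Ns[of i b] e xX by auto
  next
    assume ax: "a = x i"
    show ?thesis
    proof (cases "b \<in> S")
      case True
      then show ?thesis using NS_x[of b i] e ax sym sX by auto
    next
      case False
      let ?a1 = "s (i + m - 1)" and ?a2 = "s (Suc (i + m - 1))"
      have "E ?a1 (x i)" "E ?a2 (x i)" using esx1[of "i + m - 1"] esx[of "Suc (i + m - 1)"] x_pred[of i] by auto
      moreover have "?a1 \<noteq> ?a2" using s_ne by metis
      moreover have "b \<in> V - S" using False e inV by auto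
      ultimately have "E ?a1 b \<or> E ?a2 b"
        using claw_share[of "x i" b ?a1 ?a2] xT e ax sS by blast
      then show ?thesis using Ns xX by blast
    qed
  qed
qed

lemma V_X: "V = X"
proof
  show "X \<subseteq> V" unfolding X_def using xT sS SV by auto
  show "V \<subseteq> X"
  proof
    fix v assume v: "v \<in> V"
    have "E\<^sup>*\<^sup>* (x 0) v" using conn v xT[of 0] unfolding connected_graph_def by blast
    then show "v \<in> X"
    proof (induction rule: rtranclp_induct)
      case base then show ?case using xX by blast
    next
      case (step y z) then show ?case using closed by blast
    qed
  qed
qed

lemma f_alt: "f (x (Suc i)) \<noteq> f (x i)"
proof
  assume eq: "f (x (Suc i)) = f (x i)"
  have "N (s i) = {x i, x (Suc i)}" using Ns esx esx1 xT unfolding N_def by auto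
  then have "f (x i) = {1,2}" using fN[OF sS, of i] eq by auto
  then show False using fT[OF xT[of i]] by auto
qed

lemma f_par: "f (x i) = f (x 0) \<longleftrightarrow> even i"
proof (induction i)
  case 0 then show ?case by simp
next
  case (Suc i)
  have "f (x (Suc i)) \<noteq> f (x i)" by (rule f_alt)
  moreover have "f (x (Suc i)) = {1} \<or> f (x (Suc i)) = {2}" "f (x i) = {1} \<or> f (x i) = {2}"
    "f (x 0) = {1} \<or> f (x 0) = {2}" using fT xT by blast+
  ultimately show ?case using Suc by auto
qed

lemma m_even: "even m" using f_par[of m] xm by simp

definition "tri i \<longleftrightarrow> E (x i) (x (Suc i)) \<and> (m = 2 \<longrightarrow> i = 0)"

lemma E_xx: "p < m \<Longrightarrow> q < m \<Longrightarrow> E (x p) (x q) \<longleftrightarrow>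
   (tri p \<and> q = Suc p mod m) \<or> (tri q \<and> p = Suc q mod m)"
proof
  assume pq: "p < m" "q < m"
  assume "(tri p \<and> q = Suc p mod m) \<or> (tri q \<and> p = Suc q mod m)"
  then show "E (x p) (x q)"
  proof
    assume "tri p \<and> q = Suc p mod m"
    then show ?thesis using x_mod[of "Suc p"] unfolding tri_def by auto
  next
    assume "tri q \<and> p = Suc q mod m"
    then show ?thesis using x_mod[of "Suc q"] sym unfolding tri_def by auto
  qed
next
  assume pq: "p < m" "q < m" and e: "E (x p) (x q)"
  let ?a1 = "s (p + m - 1)" and ?a2 = "s (Suc (p + m - 1))"
  have "E ?a1 (x p)" "E ?a2 (x p)" using esx1[of "p + m - 1"] esx[of "Suc (p + m - 1)"] x_pred[of p] by auto
  moreover have "?a1 \<noteq> ?a2" using s_ne by metis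
  ultimately have "E ?a1 (x q) \<or> E ?a2 (x q)"
    using claw_share[of "x p" "x q" ?a1 ?a2] xT e sS by blast
  then obtain j where "E (s j) (x p)" "E (s j) (x q)"
    using \<open>E ?a1 (x p)\<close> \<open>E ?a2 (x p)\<close> by blast
  then have "(x p = x j \<or> x p = x (Suc j)) \<and> (x q = x j \<or> x q = x (Suc j))" using Ns by blast
  moreover have "x p \<noteq> x q" using e irr by auto
  ultimately have c: "(x p = x j \<and> x q = x (Suc j)) \<or> (x q = x j \<and> x p = x (Suc j))" by auto
  have m_pos: "0 < m" using m2 by simp
  have modp: "\<And>a. a < m \<Longrightarrow> a mod m = a" by simp
  from c show "(tri p \<and> q = Suc p mod m) \<or> (tri q \<and> p = Suc q mod m)"
  proof
    assume "x p = x j \<and> x q = x (Suc j)"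
    then have pj: "p = j mod m" and qj: "q = Suc j mod m" using x_eq pq by simp_all
    then have q: "q = Suc p mod m" by (simp add: mod_Suc_eq)
    have ep: "E (x p) (x (Suc p))" using e x_mod[of "Suc p"] q by simp
    show ?thesis
    proof (cases "m = 2 \<and> p = 1")
      case True
      then have "q = 0" using q by simp
      moreover have "x (Suc (Suc 0)) = x 0" using x_mod[of "Suc (Suc 0)"] True by simp
      ultimately have "tri q" using ep True sym unfolding tri_def by auto
      then show ?thesis using True \<open>q = 0\<close> by simp
    next
      case False then show ?thesis using ep q pq unfolding tri_def by auto
    qed
  next
    assume "x q = x j \<and> x p = x (Suc j)"
    then have qj: "q = j mod m" and pj: "p = Suc j mod m" using x_eq pq by simp_all
    then have p: "p = Suc q mod m" by (simp add: mod_Suc_eq)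
    have eq: "E (x q) (x (Suc q))" using e sym x_mod[of "Suc q"] p by metis
    show ?thesis
    proof (cases "m = 2 \<and> q = 1")
      case True
      then have "p = 0" using p by simp
      moreover have "x (Suc (Suc 0)) = x 0" using x_mod[of "Suc (Suc 0)"] True by simp
      ultimately have "tri p" using eq True sym unfolding tri_def by auto
      then show ?thesis using True \<open>p = 0\<close> by simp
    next
      case False then show ?thesis using eq p pq unfolding tri_def by auto
    qed
  qed
qed

lemma E_sx: "p < m \<Longrightarrow> q < m \<Longrightarrow> E (s p) (x q) \<longleftrightarrow> q = p \<or> q = Suc p mod m"
proof
  assume pq: "p < m" "q < m" and e: "E (s p) (x q)"
  then have "x q = x p \<or> x q = x (Suc p)" using Ns by blast
  then show "q = p \<or> q = Suc p mod m" using x_eq pq by auto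
next
  assume pq: "p < m" "q < m" and d: "q = p \<or> q = Suc p mod m"
  from d show "E (s p) (x q)"
  proof
    assume "q = Suc p mod m"
    then have "x q = x (Suc p)" using x_mod[of "Suc p"] by simp
    then show ?thesis using esx1 by simp
  qed (use esx in simp)
qed

definition "psi v = (case v of GP _ i \<Rightarrow> x i | GU _ i \<Rightarrow> s i | GW _ \<Rightarrow> x 0)"

lemma psi_bij: "bij_betw psi (CV m) V"
proof -
  have "inj_on psi (CV m)"
  proof (rule inj_onI)
    fix a b assume a: "a \<in> CV m" and b: "b \<in> CV m" and eq: "psi a = psi b"
    from a b show "a = b" unfolding CV_def
    proof (elim UnE CollectE exE conjE)
      fix i j assume "a = GP 0 i" "i < m" "b = GP 0 j" "j < m"
      then show "a = b" using eq x_inj unfolding psi_def by simp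
    next
      fix i j assume "a = GU 0 i" "i < m" "b = GU 0 j" "j < m"
      then show "a = b" using eq s_inj unfolding psi_def by simp
    next
      fix i j assume "a = GP 0 i" "b = GU 0 j"
      then show "a = b" using eq xT[of i] sS[of j] unfolding psi_def by auto
    next
      fix i j assume "a = GU 0 i" "b = GP 0 j"
      then show "a = b" using eq xT[of j] sS[of i] unfolding psi_def by auto
    qed
  qed
  moreover have "psi ` CV m = V"
  proof -
    have "CV m = (\<lambda>i. GP 0 i) ` {..<m} \<union> (\<lambda>i. GU 0 i) ` {..<m}" unfolding CV_def by auto
    then have "psi ` CV m = (\<lambda>i. psi (GP 0 i)) ` {..<m} \<union> (\<lambda>i. psi (GU 0 i)) ` {..<m}"
      by (simp add: image_Un image_image)
    also have "\<dots> = X" unfolding X_def psi_def by simp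
    finally show ?thesis using V_X by simp
  qed
  ultimately show ?thesis unfolding bij_betw_def by blast
qed

lemma iso_C: "graph_iso V E (CV m) (CE m tri)"
proof (rule iso_from_inv[OF psi_bij], intro ballI)
  fix a b assume a: "a \<in> CV m" and b: "b \<in> CV m"
  from a b show "E (psi a) (psi b) \<longleftrightarrow> CE m tri a b" unfolding CV_def
  proof (elim UnE CollectE exE conjE)
    fix i j assume "a = GP 0 i" "i < m" "b = GP 0 j" "j < m"
    then show ?thesis using E_xx CE_PP unfolding psi_def by simp
  next
    fix i j assume "a = GU 0 i" "i < m" "b = GU 0 j" "j < m"
    then show ?thesis using indS sS CE_UU unfolding psi_def by simp
  next
    fix i j assume "a = GP 0 i" "i < m" "b = GU 0 j" "j < m"
    then show ?thesis using E_sx CE_PU sym unfolding psi_def by (simp, metis)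
  next
    fix i j assume "a = GU 0 i" "i < m" "b = GP 0 j" "j < m"
    then show ?thesis using E_sx CE_UP unfolding psi_def by simp
  qed
qed

lemma tri_last:
  assumes "a \<in> S" "E a t0" "a \<noteq> s0" "E a u" "u \<noteq> t0" "\<not> E u t0"
  shows "\<not> tri (m - 1)"
proof -
  obtain p where mp: "m = Suc p" using m_prop by (metis gr0_implies_Suc)
  have "a = s p \<or> a = s (Suc p)" using NSx[of a p] assms xm x0 mp by simp
  then have ap: "a = s p" using sm s_0 assms mp by auto
  then have "u = x p" using Ns[of p u] assms xm x0 mp by auto
  then show ?thesis using assms xm x0 mp unfolding tri_def by auto
qed

lemma tri_all:
  assumes "\<forall>a\<in>S. \<forall>u v. E a u \<longrightarrow> E a v \<longrightarrow> u \<noteq> v \<longrightarrow> E u v"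
  shows "tri i \<longleftrightarrow> (m = 2 \<longrightarrow> i = 0)"
proof -
  have "E (s i) (x i) \<longrightarrow> E (s i) (x (Suc i)) \<longrightarrow> x i \<noteq> x (Suc i) \<longrightarrow> E (x i) (x (Suc i))"
    using assms sS[of i] by blast
  then have "E (x i) (x (Suc i))" using esx[of i] esx1[of i] x_ne[of i] by simp
  then show ?thesis unfolding tri_def by simp
qed

end

definition st :: "(nat \<Rightarrow> nat) \<Rightarrow> nat \<Rightarrow> nat" where
  "st k j = (\<Sum>i<j. k i)"

definition tri_k :: "nat \<Rightarrow> (nat \<Rightarrow> nat) \<Rightarrow> nat \<Rightarrow> bool" where
  "tri_k r k p \<longleftrightarrow> \<not> (\<exists>j<r. Suc p = st k (Suc j))"

lemma st_0[simp]: "st k 0 = 0" and st_Suc: "st k (Suc j) = st k j + k j"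
  unfolding st_def by simp_all

lemma st_mono: "a \<le> b \<Longrightarrow> st k a \<le> st k b"
  unfolding st_def by (rule sum_mono2) auto

lemma pos_uniq:
  assumes "i < k j" "i' < k j'" "st k j + i = st k j' + i'"
  shows "j = j' \<and> i = i'"
proof -
  have "\<not> j < j'" if "i < k j" "st k j + i = st k j' + i'" for j j' i i'
  proof
    assume "j < j'"
    then have "st k (Suc j) \<le> st k j'" by (intro st_mono) simp
    then show False using that st_Suc[of k j] by simp
  qed
  then have "j = j'" using assms by (metis nat_neq_iff)
  then show ?thesis using assms by simp
qed

lemma pos_ex: "p < st k r \<Longrightarrow> \<exists>j<r. st k j \<le> p \<and> p < st k (Suc j)"
proof (induction r)
  case 0 then show ?case by simp
next
  case (Suc r)
  show ?case
  proof (cases "p < st k r")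
    case True then show ?thesis using Suc.IH by (metis less_SucI)
  next
    case False then show ?thesis using Suc.prems by auto
  qed
qed

definition psi2 :: "(nat \<Rightarrow> nat) \<Rightarrow> gv \<Rightarrow> gv" where
  "psi2 k v = (case v of GP j i \<Rightarrow> GP 0 (st k j + i) | GU j i \<Rightarrow> GU 0 (st k j + i)
     | GW j \<Rightarrow> GU 0 (st k j + k j - 1))"

lemma G1E_PP: "G1E r k (GP j i) (GP j' i') \<longleftrightarrow>
    j < r \<and> j' = j \<and> ((i' = Suc i \<and> Suc i < k j) \<or> (i = Suc i' \<and> Suc i' < k j))"
  unfolding G1E_def sym_rel_def G1A_def by auto

lemma G1E_UP: "G1E r k (GU j i) (GP j' i') \<longleftrightarrow>
    j < r \<and> Suc i < k j \<and> j' = j \<and> (i' = i \<or> i' = Suc i)"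
  unfolding G1E_def sym_rel_def G1A_def by auto

lemma G1E_PU: "G1E r k (GP j' i') (GU j i) \<longleftrightarrow>
    j < r \<and> Suc i < k j \<and> j' = j \<and> (i' = i \<or> i' = Suc i)"
  unfolding G1E_def sym_rel_def G1A_def by auto

lemma G1E_WP: "G1E r k (GW j) (GP j' i') \<longleftrightarrow>
    j < r \<and> ((j' = j \<and> i' = k j - 1) \<or> (j' = Suc j mod r \<and> i' = 0))"
  unfolding G1E_def sym_rel_def G1A_def by auto

lemma G1E_PW: "G1E r k (GP j' i') (GW j) \<longleftrightarrow>
    j < r \<and> ((j' = j \<and> i' = k j - 1) \<or> (j' = Suc j mod r \<and> i' = 0))"
  unfolding G1E_def sym_rel_def G1A_def by auto

lemma G1E_other: "\<not> G1E r k (GU j i) (GU j' i')" "\<not> G1E r k (GU j i) (GW j')"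
   "\<not> G1E r k (GW j') (GU j i)" "\<not> G1E r k (GW j) (GW j')"
  unfolding G1E_def sym_rel_def G1A_def by auto

lemma CE_UW: "\<not> CE m tri (GU 0 p) (GU 0 q)" by (rule CE_UU)

context
  fixes r :: nat and k :: "nat \<Rightarrow> nat"
  assumes kpos: "\<forall>j<r. 1 \<le> k j"
begin

lemma end_iff:
  assumes "i < k j"
  shows "(\<exists>j'<r. Suc (st k j + i) = st k (Suc j')) \<longleftrightarrow> (j < r \<and> Suc i = k j)"
proof
  assume "\<exists>j'<r. Suc (st k j + i) = st k (Suc j')"
  then obtain j' where j': "j' < r" "Suc (st k j + i) = st k j' + k j'" using st_Suc by metis
  then have "0 < k j'" using kpos by auto
  then have "st k j + i = st k j' + (k j' - 1)" "k j' - 1 < k j'" using j' by simp_all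
  then show "j < r \<and> Suc i = k j" using pos_uniq[of i k j "k j' - 1" j', OF assms] j' by auto
next
  assume "j < r \<and> Suc i = k j"
  then show "\<exists>j'<r. Suc (st k j + i) = st k (Suc j')" using st_Suc by auto
qed

lemma pos_lt: "j < r \<Longrightarrow> i < k j \<Longrightarrow> st k j + i < st k r"
proof -
  assume "j < r" "i < k j"
  then have "st k (Suc j) \<le> st k r" by (intro st_mono) simp
  then show ?thesis using \<open>i < k j\<close> st_Suc[of k j] by simp
qed

lemma tri_step:
  assumes j: "j < r" "i < k j" and j': "j' < r" "i' < k j'"
  shows "(tri_k r k (st k j + i) \<and> st k j' + i' = Suc (st k j + i) mod st k r)
    \<longleftrightarrow> (j' = j \<and> i' = Suc i \<and> Suc i < k j)"
proof
  assume H: "tri_k r k (st k j + i) \<and> st k j' + i' = Suc (st k j + i) mod st k r"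
  then have "Suc i \<noteq> k j" using end_iff[of i j, OF j(2)] j unfolding tri_k_def by auto
  then have si: "Suc i < k j" using j by simp
  then have "Suc (st k j + i) < st k r" using pos_lt[OF j(1) si] by simp
  then have "st k j' + i' = st k j + Suc i" using H by simp
  then show "j' = j \<and> i' = Suc i \<and> Suc i < k j" using pos_uniq[of i' k j' "Suc i" j, OF j'(2) si] si by auto
next
  assume H: "j' = j \<and> i' = Suc i \<and> Suc i < k j"
  then have "\<not> (j < r \<and> Suc i = k j)" by simp
  then have "tri_k r k (st k j + i)" using end_iff[of i j, OF j(2)] unfolding tri_k_def by simp
  moreover have "Suc (st k j + i) < st k r" using pos_lt[OF j(1), of "Suc i"] H by simp
  ultimately show "tri_k r k (st k j + i) \<and> st k j' + i' = Suc (st k j + i) mod st k r"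
    using H by simp
qed

lemma wrap:
  assumes j: "j < r" and j': "j' < r" "i' < k j'"
  shows "st k j' + i' = Suc (st k j + k j - 1) mod st k r \<longleftrightarrow> (j' = Suc j mod r \<and> i' = 0)"
proof -
  have kj: "1 \<le> k j" using kpos j by simp
  have e: "Suc (st k j + k j - 1) = st k (Suc j)" using kj st_Suc[of k j] by simp
  show ?thesis
  proof (cases "Suc j < r")
    case True
    have k1: "0 < k (Suc j)" using kpos True by auto
    have "st k (Suc j) + 0 < st k r" using pos_lt[OF True k1] .
    then have "Suc (st k j + k j - 1) mod st k r = st k (Suc j) + 0" using e by simp
    then show ?thesis using pos_uniq[of i' k j' 0 "Suc j", OF j'(2) k1] True by auto
  next
    case False
    then have "Suc j = r" using j by simp
    then have "Suc (st k j + k j - 1) mod st k r = st k 0 + 0" using e by simp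
    moreover have k0: "0 < k 0" using kpos j by auto
    ultimately show ?thesis using pos_uniq[of i' k j' 0 0, OF j'(2) k0] \<open>Suc j = r\<close> by auto
  qed
qed

lemma psi2_bij: "bij_betw (psi2 k) (G1V r k) (CV (st k r))"
  unfolding bij_betw_def
proof
  show "inj_on (psi2 k) (G1V r k)"
  proof (rule inj_onI)
    fix a b assume a: "a \<in> G1V r k" and b: "b \<in> G1V r k" and eq: "psi2 k a = psi2 k b"
    from a b show "a = b" unfolding G1V_def
    proof (elim UnE CollectE exE conjE)
      fix j i j' i' assume "a = GP j i" "b = GP j' i'" "i < k j" "i' < k j'"
      moreover have "st k j + i = st k j' + i'" using eq \<open>a = GP j i\<close> \<open>b = GP j' i'\<close> unfolding psi2_def by simp
      ultimately show "a = b" using pos_uniq[of i k j i' j'] by simp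
    next
      fix j i j' i' assume "a = GU j i" "b = GU j' i'" "Suc i < k j" "Suc i' < k j'"
      moreover have "st k j + i = st k j' + i'" using eq \<open>a = GU j i\<close> \<open>b = GU j' i'\<close> unfolding psi2_def by simp
      ultimately show "a = b" using pos_uniq[of i k j i' j'] by simp
    next
      fix j j' assume "a = GW j" "b = GW j'" "j < r" "j' < r"
      moreover have kj: "0 < k j" "0 < k j'" using kpos \<open>j < r\<close> \<open>j' < r\<close> by auto
      ultimately have "st k j + (k j - 1) = st k j' + (k j' - 1)" using eq unfolding psi2_def by simp
      then have "j = j'" using pos_uniq[of "k j - 1" k j "k j' - 1" j'] kj by simp
      then show "a = b" using \<open>a = GW j\<close> \<open>b = GW j'\<close> by simp
    next
      fix j i j' assume "a = GU j i" "b = GW j'" "Suc i < k j" "j' < r"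
      moreover have kj: "0 < k j'" using kpos \<open>j' < r\<close> by auto
      ultimately have "st k j + i = st k j' + (k j' - 1)" using eq unfolding psi2_def by simp
      then have "j = j' \<and> i = k j' - 1" using pos_uniq[of i k j "k j' - 1" j'] kj \<open>Suc i < k j\<close> by simp
      then show "a = b" using \<open>Suc i < k j\<close> by simp
    next
      fix j i j' assume "b = GU j i" "a = GW j'" "Suc i < k j" "j' < r"
      moreover have kj: "0 < k j'" using kpos \<open>j' < r\<close> by auto
      ultimately have "st k j + i = st k j' + (k j' - 1)" using eq unfolding psi2_def by simp
      then have "j = j' \<and> i = k j' - 1" using pos_uniq[of i k j "k j' - 1" j'] kj \<open>Suc i < k j\<close> by simp
      then show "a = b" using \<open>Suc i < k j\<close> by simp
    qed (use eq in \<open>auto simp: psi2_def\<close>)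
  qed
  show "psi2 k ` G1V r k = CV (st k r)"
  proof
    show "psi2 k ` G1V r k \<subseteq> CV (st k r)"
    proof
      fix y assume "y \<in> psi2 k ` G1V r k"
      then obtain a where a: "a \<in> G1V r k" "y = psi2 k a" by blast
      from a(1) show "y \<in> CV (st k r)" unfolding G1V_def
      proof (elim UnE CollectE exE conjE)
        fix j i assume "a = GP j i" "j < r" "i < k j"
        then show ?thesis using a pos_lt unfolding psi2_def CV_def by auto
      next
        fix j i assume "a = GU j i" "j < r" "Suc i < k j"
        then show ?thesis using a pos_lt[of j i] unfolding psi2_def CV_def by auto
      next
        fix j assume "a = GW j" "j < r"
        then show ?thesis using a pos_lt[of j "k j - 1"] kpos unfolding psi2_def CV_def by auto
      qed
    qed
    show "CV (st k r) \<subseteq> psi2 k ` G1V r k"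
    proof
      fix y assume "y \<in> CV (st k r)"
      then obtain p where p: "p < st k r" "y = GP 0 p \<or> y = GU 0 p" unfolding CV_def by blast
      obtain j where j: "j < r" "st k j \<le> p" "p < st k (Suc j)" using pos_ex[OF p(1)] by blast
      define i where "i = p - st k j"
      have pi: "p = st k j + i" "i < k j" using j st_Suc[of k j] unfolding i_def by auto
      from p(2) show "y \<in> psi2 k ` G1V r k"
      proof
        assume "y = GP 0 p"
        then have "y = psi2 k (GP j i)" "GP j i \<in> G1V r k" using pi j unfolding psi2_def G1V_def by auto
        then show ?thesis by blast
      next
        assume y: "y = GU 0 p"
        show ?thesis
        proof (cases "Suc i < k j")
          case True
          then have "y = psi2 k (GU j i)" "GU j i \<in> G1V r k" using pi j y unfolding psi2_def G1V_def by auto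
          then show ?thesis by blast
        next
          case False
          then have "i = k j - 1" using pi by simp
          then have "y = psi2 k (GW j)" "GW j \<in> G1V r k" using pi j y unfolding psi2_def G1V_def by auto
          then show ?thesis by blast
        qed
      qed
    qed
  qed
qed

lemma G1_iso: "graph_iso (G1V r k) (G1E r k) (CV (st k r)) (CE (st k r) (tri_k r k))"
  unfolding graph_iso_def
proof (intro exI conjI ballI)
  show "bij_betw (psi2 k) (G1V r k) (CV (st k r))" by (rule psi2_bij)
  fix a b assume a: "a \<in> G1V r k" and b: "b \<in> G1V r k"
  let ?m = "st k r"
  from a b show "G1E r k a b \<longleftrightarrow> CE ?m (tri_k r k) (psi2 k a) (psi2 k b)" unfolding G1V_def
  proof (elim UnE CollectE exE conjE)
    fix j i j' i' assume ab: "a = GP j i" "b = GP j' i'" "j < r" "i < k j" "j' < r" "i' < k j'"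
    have "CE ?m (tri_k r k) (psi2 k a) (psi2 k b) \<longleftrightarrow>
       (tri_k r k (st k j + i) \<and> st k j' + i' = Suc (st k j + i) mod ?m)
       \<or> (tri_k r k (st k j' + i') \<and> st k j + i = Suc (st k j' + i') mod ?m)"
      using ab CE_PP[OF pos_lt pos_lt] unfolding psi2_def by simp
    also have "\<dots> \<longleftrightarrow> (j' = j \<and> i' = Suc i \<and> Suc i < k j) \<or> (j = j' \<and> i = Suc i' \<and> Suc i' < k j')"
      using tri_step[of j i j' i'] tri_step[of j' i' j i] ab by simp
    also have "\<dots> \<longleftrightarrow> G1E r k a b" using ab G1E_PP by auto
    finally show ?thesis by simp
  next
    fix j i j' i' assume ab: "a = GU j i" "b = GU j' i'"
    then show ?thesis using G1E_other CE_UU unfolding psi2_def by simp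
  next
    fix j j' assume ab: "a = GW j" "b = GW j'"
    then show ?thesis using G1E_other CE_UU unfolding psi2_def by simp
  next
    fix j i j' assume ab: "a = GU j i" "b = GW j'"
    then show ?thesis using G1E_other CE_UU unfolding psi2_def by simp
  next
    fix j i j' assume ab: "b = GU j i" "a = GW j'"
    then show ?thesis using G1E_other CE_UU unfolding psi2_def by simp
  next
    fix j i j' i' assume ab: "a = GU j i" "b = GP j' i'" "j < r" "Suc i < k j" "j' < r" "i' < k j'"
    have lt: "Suc (st k j + i) < ?m" using pos_lt[OF ab(3) ab(4)] by simp
    have "CE ?m (tri_k r k) (psi2 k a) (psi2 k b) \<longleftrightarrow>
        (st k j' + i' = st k j + i \<or> st k j' + i' = st k j + Suc i)"
      using ab CE_UP lt unfolding psi2_def by auto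
    also have "\<dots> \<longleftrightarrow> (j' = j \<and> (i' = i \<or> i' = Suc i))"
      using pos_uniq[of i' k j' i j, OF ab(6)] pos_uniq[of i' k j' "Suc i" j, OF ab(6)] ab by auto
    also have "\<dots> \<longleftrightarrow> G1E r k a b" using ab G1E_UP by auto
    finally show ?thesis by simp
  next
    fix j i j' i' assume ab: "b = GU j i" "a = GP j' i'" "j < r" "Suc i < k j" "j' < r" "i' < k j'"
    have lt: "Suc (st k j + i) < ?m" using pos_lt[OF ab(3) ab(4)] by simp
    have "CE ?m (tri_k r k) (psi2 k a) (psi2 k b) \<longleftrightarrow>
        (st k j' + i' = st k j + i \<or> st k j' + i' = st k j + Suc i)"
      using ab CE_PU lt unfolding psi2_def by auto
    also have "\<dots> \<longleftrightarrow> (j' = j \<and> (i' = i \<or> i' = Suc i))"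
      using pos_uniq[of i' k j' i j, OF ab(6)] pos_uniq[of i' k j' "Suc i" j, OF ab(6)] ab by auto
    also have "\<dots> \<longleftrightarrow> G1E r k a b" using ab G1E_PU by auto
    finally show ?thesis by simp
  next
    fix j j' i' assume ab: "a = GW j" "b = GP j' i'" "j < r" "j' < r" "i' < k j'"
    have kj: "0 < k j" using kpos ab by auto
    have lt: "st k j + (k j - 1) < ?m" using pos_lt[OF ab(3), of "k j - 1"] kj by simp
    have "CE ?m (tri_k r k) (psi2 k a) (psi2 k b) \<longleftrightarrow>
        (st k j' + i' = st k j + (k j - 1) \<or> st k j' + i' = Suc (st k j + k j - 1) mod ?m)"
      using ab CE_UP lt kj unfolding psi2_def by auto
    also have "\<dots> \<longleftrightarrow> ((j' = j \<and> i' = k j - 1) \<or> (j' = Suc j mod r \<and> i' = 0))"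
      using pos_uniq[of i' k j' "k j - 1" j, OF ab(5)] wrap[OF ab(3) ab(4) ab(5)] kj by auto
    also have "\<dots> \<longleftrightarrow> G1E r k a b" using ab G1E_WP by auto
    finally show ?thesis by simp
  next
    fix j j' i' assume ab: "b = GW j" "a = GP j' i'" "j < r" "j' < r" "i' < k j'"
    have kj: "0 < k j" using kpos ab by auto
    have lt: "st k j + (k j - 1) < ?m" using pos_lt[OF ab(3), of "k j - 1"] kj by simp
    have "CE ?m (tri_k r k) (psi2 k a) (psi2 k b) \<longleftrightarrow>
        (st k j' + i' = st k j + (k j - 1) \<or> st k j' + i' = Suc (st k j + k j - 1) mod ?m)"
      using ab CE_PU lt kj unfolding psi2_def by auto
    also have "\<dots> \<longleftrightarrow> ((j' = j \<and> i' = k j - 1) \<or> (j' = Suc j mod r \<and> i' = 0))"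
      using pos_uniq[of i' k j' "k j - 1" j, OF ab(5)] wrap[OF ab(3) ab(4) ab(5)] kj by auto
    also have "\<dots> \<longleftrightarrow> G1E r k a b" using ab G1E_PW by auto
    finally show ?thesis by simp
  qed
qed

end

lemma CE_cong: "(\<forall>i<m. tri i = tri' i) \<Longrightarrow> CE m tri = CE m tri'"
  unfolding CE_def sym_rel_def CA_def by (intro ext) auto

lemma G3_eq: "G3V q = CV (2 * q)" "G3E q = CE (2 * q) (\<lambda>_. True)"
proof -
  show "G3V q = CV (2 * q)" unfolding G3V_def CV_def by simp
  have "G3A q = CA (2 * q) (\<lambda>_. True)" unfolding G3A_def CA_def by (intro ext) simp
  then show "G3E q = CE (2 * q) (\<lambda>_. True)" unfolding G3E_def CE_def by simp
qed

lemma G2_eq: "G2V k = G1V 1 (\<lambda>_. k)" "G2E k = G1E 1 (\<lambda>_. k)"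
proof -
  show "G2V k = G1V 1 (\<lambda>_. k)" unfolding G2V_def G1V_def by auto
  have "G2A k = G1A 1 (\<lambda>_. k)" unfolding G2A_def G1A_def by (intro ext) auto
  then show "G2E k = G1E 1 (\<lambda>_. k)" unfolding G2E_def G1E_def by simp
qed

definition gC :: "gv \<Rightarrow> nat set" where
  "gC v = (case v of GP _ i \<Rightarrow> {if even i then 1 else 2} | GU _ _ \<Rightarrow> {} | GW _ \<Rightarrow> {})"

lemma CV_img: "CV m = (\<lambda>i. GP 0 i) ` {..<m} \<union> (\<lambda>i. GU 0 i) ` {..<m}"
  unfolding CV_def by auto

lemma C_card: "card (CV m) = 2 * m"
proof -
  have "card ((\<lambda>i. GP 0 i) ` {..<m} \<union> (\<lambda>i. GU 0 i) ` {..<m}) =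
      card ((\<lambda>i. GP 0 i) ` {..<m}) + card ((\<lambda>i. GU 0 i) ` {..<m})"
    by (rule card_Un_disjoint) auto
  also have "\<dots> = m + m" by (simp add: card_image inj_on_def)
  finally show ?thesis unfolding CV_img by simp
qed

lemma C_weight: "weight (CV m) gC = m"
proof -
  have "weight (CV m) gC = (\<Sum>v\<in>(\<lambda>i. GP 0 i) ` {..<m}. card (gC v)) + (\<Sum>v\<in>(\<lambda>i. GU 0 i) ` {..<m}. card (gC v))"
    unfolding weight_def CV_img by (rule sum.union_disjoint) auto
  also have "\<dots> = m" by (simp add: sum.reindex inj_on_def gC_def)
  finally show ?thesis .
qed

lemma C_oi2rd: assumes "even m" "2 \<le> m" shows "oi2rd (CV m) (CE m tri) gC"
  unfolding oi2rd_def
proof (intro conjI ballI impI)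
  fix v assume "v \<in> CV m" then show "gC v \<subseteq> {1,2}" unfolding gC_def by (auto split: gv.split)
next
  fix v assume v: "v \<in> CV m" and e: "gC v = {}"
  then obtain i where i: "v = GU 0 i" "i < m" unfolding CV_def gC_def by auto
  have par: "even (Suc i mod m) \<longleftrightarrow> \<not> even i"
  proof (cases "Suc i < m")
    case True then show ?thesis by simp
  next
    case False then have "Suc i = m" using i by simp
    then show ?thesis using assms by auto
  qed
  have n: "GP 0 i \<in> {u \<in> CV m. CE m tri v u}" "GP 0 (Suc i mod m) \<in> {u \<in> CV m. CE m tri v u}"
    using i CE_UP assms unfolding CV_def by auto
  have "{1,2} \<subseteq> (\<Union>u\<in>{u \<in> CV m. CE m tri v u}. gC u)"
    using n par unfolding gC_def by (cases "even i") force+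
  moreover have "(\<Union>u\<in>{u \<in> CV m. CE m tri v u}. gC u) \<subseteq> {1,2}" unfolding gC_def by (auto split: gv.split_asm if_splits)
  ultimately show "(\<Union>u\<in>{u \<in> CV m. CE m tri v u}. gC u) = {1,2}" by blast
next
  fix u v assume "u \<in> CV m" "v \<in> CV m" "gC u = {} \<and> gC v = {}"
  then show "\<not> CE m tri u v" unfolding CV_def gC_def using CE_UU by auto
qed

lemma decomp:
  "1 \<le> m \<Longrightarrow> \<not> tri (m - 1) \<Longrightarrow>
   \<exists>r k. 1 \<le> r \<and> (\<forall>j<r. 1 \<le> k j) \<and> st k r = m \<and> (\<forall>p<m. tri p = tri_k r k p)"
proof (induction m rule: less_induct)
  case (less m)
  let ?B = "{p. p < m - 1 \<and> \<not> tri p}"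
  show ?case
  proof (cases "?B = {}")
    case True
    let ?k = "\<lambda>_::nat. m"
    have "st ?k 1 = m" by (simp add: st_def)
    moreover have "\<forall>p<m. tri p = tri_k 1 ?k p"
    proof (intro allI impI)
      fix p assume p: "p < m"
      have "tri_k 1 ?k p \<longleftrightarrow> Suc p \<noteq> m" unfolding tri_k_def st_def by simp
      then show "tri p = tri_k 1 ?k p" using True less.prems p by (cases "p = m - 1") auto
    qed
    ultimately show ?thesis using less.prems by (intro exI[of _ 1] exI[of _ ?k]) auto
  next
    case False
    define m' where "m' = Suc (Max ?B)"
    have finB: "finite ?B" by simp
    have MB: "Max ?B \<in> ?B" using False finB by (intro Max_in) auto
    have m'lt: "m' < m" and m'1: "1 \<le> m'" and ntr: "\<not> tri (m' - 1)" using MB unfolding m'_def by auto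
    have above: "tri p" if "m' \<le> p" "p < m - 1" for p
    proof (rule ccontr)
      assume "\<not> tri p"
      then have "p \<in> ?B" using that by simp
      then have "p \<le> Max ?B" using finB by (intro Max_ge)
      then show False using that unfolding m'_def by simp
    qed
    obtain r' k' where IH: "1 \<le> r'" "\<forall>j<r'. 1 \<le> k' j" "st k' r' = m'" "\<forall>p<m'. tri p = tri_k r' k' p"
      using less.IH[OF m'lt m'1 ntr] by blast
    define k where "k = k'(r' := m - m')"
    have stk: "st k j = st k' j" if "j \<le> r'" for j
      unfolding st_def k_def using that by (intro sum.cong) auto
    have stSr: "st k (Suc r') = m" using st_Suc[of k r'] stk[of r'] IH(3) m'lt unfolding k_def by simp
    have bound: "st k' (Suc j) \<le> m'" if "j < r'" for j using st_mono[of "Suc j" r' k'] that IH(3) by simp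
    have trik: "tri_k (Suc r') k p \<longleftrightarrow> \<not> ((\<exists>j<r'. Suc p = st k' (Suc j)) \<or> Suc p = m)" for p
    proof -
      have "(\<exists>j<Suc r'. Suc p = st k (Suc j)) \<longleftrightarrow> (\<exists>j<r'. Suc p = st k (Suc j)) \<or> Suc p = st k (Suc r')"
        by (auto simp: less_Suc_eq)
      also have "\<dots> \<longleftrightarrow> (\<exists>j<r'. Suc p = st k' (Suc j)) \<or> Suc p = m"
        using stk stSr by auto
      finally show ?thesis unfolding tri_k_def by simp
    qed
    have "\<forall>p<m. tri p = tri_k (Suc r') k p"
    proof (intro allI impI)
      fix p assume p: "p < m"
      show "tri p = tri_k (Suc r') k p"
      proof (cases "p < m'")
        case True
        then have "Suc p \<noteq> m" using m'lt by simp
        then show ?thesis using trik[of p] IH(4) True unfolding tri_k_def by simp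
      next
        case False
        then have nj: "\<not> (\<exists>j<r'. Suc p = st k' (Suc j))" using bound by fastforce
        show ?thesis
        proof (cases "p = m - 1")
          case True then show ?thesis using trik[of p] nj less.prems p by simp
        next
          case F2: False
          then have "tri p" using above[of p] False p by simp
          then show ?thesis using trik[of p] nj F2 p by simp
        qed
      qed
    qed
    moreover have "\<forall>j<Suc r'. 1 \<le> k j" using IH(2) m'lt unfolding k_def by (auto simp: less_Suc_eq)
    ultimately show ?thesis using stSr by (intro exI[of _ "Suc r'"] exI[of _ k]) auto
  qed
qed

lemma finish:
  assumes iso: "graph_iso V E (CV m) (CE m tri)" and ev: "even m" and m2: "2 \<le> m"
    and c: "\<not> tri (m - 1) \<or> (m \<noteq> 2 \<and> (\<forall>i<m. tri i))"
  shows "in_family_G V E"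
  using c
proof
  assume nt: "\<not> tri (m - 1)"
  have "1 \<le> m" using m2 by simp
  from decomp[of m tri, OF this nt] obtain r k where
    rk: "1 \<le> r" "\<forall>j<r. 1 \<le> k j" "st k r = m" "\<forall>p<m. tri p = tri_k r k p"
    by blast
  have ce: "CE m tri = CE m (tri_k r k)" using rk(4) by (rule CE_cong)
  have "graph_iso (G1V r k) (G1E r k) (CV (st k r)) (CE (st k r) (tri_k r k))"
    using rk(2) by (rule G1_iso)
  then have "graph_iso (CV m) (CE m (tri_k r k)) (G1V r k) (G1E r k)"
    using rk(3) by (simp add: iso_sym)
  then have gi: "graph_iso V E (G1V r k) (G1E r k)" using iso_trans[OF iso] ce by simp
  have "even (\<Sum>j<r. k j)" using rk(3) ev unfolding st_def by simp
  then have "\<exists>r k. r \<ge> 1 \<and> (\<forall>j<r. k j \<ge> 1) \<and> even (\<Sum>j<r. k j) \<and> graph_iso V E (G1V r k) (G1E r k)"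
    using rk(1,2) gi by (intro exI[of _ r] exI[of _ k]) simp
  then show ?thesis unfolding in_family_G_def by (rule disjI1)
next
  assume H: "m \<noteq> 2 \<and> (\<forall>i<m. tri i)"
  define q where "q = m div 2"
  have mq: "m = 2 * q" using ev unfolding q_def by simp
  have q2: "2 \<le> q" using mq H m2 by simp
  have "CE m tri = CE m (\<lambda>_. True)" using H by (intro CE_cong) auto
  then have "graph_iso V E (G3V q) (G3E q)" using iso mq by (simp add: G3_eq)
  then have "\<exists>q. q \<ge> 2 \<and> graph_iso V E (G3V q) (G3E q)" using q2 by blast
  then show ?thesis unfolding in_family_G_def by (intro disjI2)
qed

lemma fam_C:
  assumes "in_family_G V E"
  shows "\<exists>m tri. even m \<and> 2 \<le> m \<and> graph_iso V E (CV m) (CE m tri)"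
proof -
  have G1: "\<exists>m tri. even m \<and> 2 \<le> m \<and> graph_iso V E (CV m) (CE m tri)"
    if r: "r \<ge> 1" "\<forall>j<r. k j \<ge> 1" "even (\<Sum>j<r. k j)" "graph_iso V E (G1V r k) (G1E r k)" for r k
  proof -
    have "graph_iso V E (CV (st k r)) (CE (st k r) (tri_k r k))" using iso_trans[OF r(4) G1_iso] r by blast
    moreover have "even (st k r)" using r unfolding st_def by simp
    moreover have "1 \<le> st k r" using pos_lt[of r k 0 0] r by auto
    ultimately have "2 \<le> st k r \<and> even (st k r) \<and> graph_iso V E (CV (st k r)) (CE (st k r) (tri_k r k))"
      by (cases "st k r = 1") auto
    then show ?thesis by blast
  qed
  from assms show ?thesis unfolding in_family_G_def
  proof (elim disjE exE conjE)
    fix r k assume "r \<ge> 1" "\<forall>j<r. k j \<ge> 1" "even (\<Sum>j<r. k j)" "graph_iso V E (G1V r k) (G1E r k)"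
    then show ?thesis using G1 by blast
  next
    fix k :: nat assume k: "2 \<le> k" "even k" "graph_iso V E (G2V k) (G2E k)"
    then show ?thesis using G1[of 1 "\<lambda>_. k"] G2_eq by simp
  next
    fix q :: nat assume "2 \<le> q" "graph_iso V E (G3V q) (G3E q)"
    then show ?thesis using G3_eq by (intro exI[of _ "2 * q"] exI[of _ "\<lambda>_. True"]) auto
  qed
qed

lemma (in eqs) result: "in_family_G V E"
proof -
  have "\<exists>m tri. graph_iso V E (CV m) (CE m tri) \<and> even m \<and> 2 \<le> m
      \<and> (\<not> tri (m - 1) \<or> (m \<noteq> 2 \<and> (\<forall>i<m. tri i)))"
  proof (cases "\<exists>a\<in>S. \<exists>u v. E a u \<and> E a v \<and> u \<noteq> v \<and> \<not> E u v")
    case True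
    then obtain a u v where a: "a \<in> S" "E a u" "E a v" "u \<noteq> v" "\<not> E u v" by blast
    have uT: "u \<in> V - S" using N_T[of a u] a inV unfolding N_def by auto
    have aNS: "a \<in> NS u" using a unfolding NS_def by simp
    define s0 where "s0 = oth (NS u) a"
    have s0: "s0 \<in> NS u" "s0 \<noteq> a" using oth[OF cardNS[OF uT] aNS] unfolding s0_def by auto
    interpret w: walk V E f S u s0
      by unfold_locales (use uT s0 in \<open>auto simp: NS_def\<close>)
    have "\<not> w.tri (w.m - 1)" using w.tri_last[of a v] a s0 sym by auto
    then show ?thesis using w.iso_C w.m_even w.m2 by blast
  next
    case False
    have "V \<noteq> {}" using conn unfolding connected_graph_def by blast
    then obtain v where v: "v \<in> V" by blast
    have "\<exists>t. t \<in> V - S"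
    proof (cases "v \<in> S")
      case True
      then have "(\<Union>u\<in>N v. f u) = {1,2}" by (rule fN)
      then obtain u where "u \<in> N v" by blast
      then show ?thesis using N_T True by blast
    next
      case False then show ?thesis using v by blast
    qed
    then obtain t0 where t0: "t0 \<in> V - S" by blast
    have "NS t0 \<noteq> {}" using cardNS[OF t0] by auto
    then obtain s0 where s0: "s0 \<in> NS t0" by blast
    interpret w: walk V E f S t0 s0
      by unfold_locales (use t0 s0 in \<open>auto simp: NS_def\<close>)
    have all: "\<forall>a\<in>S. \<forall>u v. E a u \<longrightarrow> E a v \<longrightarrow> u \<noteq> v \<longrightarrow> E u v" using False by blast
    have tt: "w.tri i \<longleftrightarrow> (w.m = 2 \<longrightarrow> i = 0)" for i using w.tri_all[OF all] .
    have "\<not> w.tri (w.m - 1) \<or> (w.m \<noteq> 2 \<and> (\<forall>i<w.m. w.tri i))"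
      using tt by (cases "w.m = 2") auto
    then show ?thesis using w.iso_C w.m_even w.m2 by blast
  qed
  then show ?thesis using finish by blast
qed

theorem theorem1:
  fixes V :: "'a set" and E :: "'a \<Rightarrow> 'a \<Rightarrow> bool"
  assumes "simple_graph V E" and "connected_graph V E" and "claw_free V E"
  shows "real (gamma_oir2 V E) \<ge> real (card V) / 2
     \<and> (real (gamma_oir2 V E) = real (card V) / 2 \<longleftrightarrow> in_family_G V E)"
proof -
  obtain f where f: "oi2rd V E f" "weight V f = gamma_oir2 V E" using gamma_attained by blast
  have low: "card V \<le> 2 * gamma_oir2 V E" using counting(1)[OF assms(1) assms(3) f(1)] f(2) by simp
  have iff: "real (gamma_oir2 V E) = real (card V) / 2 \<longleftrightarrow> in_family_G V E"
  proof
    assume "real (gamma_oir2 V E) = real (card V) / 2"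
    then have eq: "card V = 2 * weight V f" using f(2) by linarith
    note c = counting(2)[OF assms(1) assms(3) f(1) eq]
    interpret eqs V E f "{v\<in>V. f v = {}}"
      by unfold_locales (use assms f c in auto)
    show "in_family_G V E" by (rule result)
  next
    assume "in_family_G V E"
    then obtain m tri where mt: "even m" "2 \<le> m" "graph_iso V E (CV m) (CE m tri)" using fam_C by blast
    obtain g where g: "oi2rd V E g" "weight V g = weight (CV m) gC"
      using oi2rd_transfer[OF mt(3) C_oi2rd[OF mt(1) mt(2)]] by blast
    obtain h where "bij_betw h V (CV m)" using mt(3) unfolding graph_iso_def by blast
    then have "card V = card (CV m)" by (rule bij_betw_same_card)
    then have cV: "card V = 2 * m" using C_card by simp
    have "gamma_oir2 V E \<le> m" using gamma_le[OF g(1)] g(2) C_weight by simp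
    then have "gamma_oir2 V E = m" using low cV by simp
    then show "real (gamma_oir2 V E) = real (card V) / 2" using cV by simp
  qed
  show ?thesis using low iff by simp
qed

end
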